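(* Let $G_1,\dots,G_n$ be finite groups and let $K$ be a simplicial complex on $[n]$ whose 1-skeleton $K^1$ is a chordal graph. Then the image of the faithful representation $\Theta_K:\prod_{K^1}G_i\to\mathrm{Aut}(F_{\rho_K})$ is not contained in the subgroup $\mathrm{IA}_{\rho_K}$.
   Context: $\prod_{K^1}G_i$ is the graph product: the quotient of $G_1*\cdots*G_n$ by the normal closure of $[g_i,g_j]$ for $g_i\in G_i,g_j\in G_j$, $\{i,j\}$ an edge of $K^1$. $F_{\rho_K}$ is the kernel of the natural projection $\prod_{K^1}G_i\to G_1\times\cdots\times G_n$, free of rank $\rho_K$ when $K^1$ is chordal, and $\Theta_K(g)(h)=ghg^{-1}$. $\mathrm{IA}_N$ is the kernel of the map $\mathrm{Aut}(F_N)\to\mathrm{GL}(N,\mathbb Z)$ induced by the action on $H_1(F_N)=\mathbb Z^N$. A graph is chordal if every cycle of length greater than three has an edge joining two nonconsecutive vertices. *)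

theory Defs
  imports "HOL-Algebra.Algebra"
begin

definition simplicial_complex :: "nat \<Rightarrow> nat set set \<Rightarrow> bool" where
  "simplicial_complex n K \<longleftrightarrow>
     (\<forall>\<sigma>\<in>K. \<sigma> \<subseteq> {1..n}) \<and>
     (\<forall>\<sigma>\<in>K. \<forall>\<tau>. \<tau> \<subseteq> \<sigma> \<longrightarrow> \<tau> \<in> K) \<and>
     (\<forall>i\<in>{1..n}. {i} \<in> K)"

definition skel_edge :: "nat set set \<Rightarrow> nat \<Rightarrow> nat \<Rightarrow> bool" where
  "skel_edge K i j \<longleftrightarrow> i \<noteq> j \<and> {i, j} \<in> K"

definition chordal :: "nat \<Rightarrow> (nat \<Rightarrow> nat \<Rightarrow> bool) \<Rightarrow> bool" where
  "chordal n E \<longleftrightarrow>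
     (\<forall>vs. length vs > 3 \<and> distinct vs \<and> set vs \<subseteq> {1..n} \<and>
        (\<forall>i<length vs. E (vs ! i) (vs ! ((i + 1) mod length vs))) \<longrightarrow>
        (\<exists>i<length vs. \<exists>j<length vs. i \<noteq> j \<and>
            j \<noteq> (i + 1) mod length vs \<and> i \<noteq> (j + 1) mod length vs \<and>
            E (vs ! i) (vs ! j)))"

definition gp_words :: "nat \<Rightarrow> (nat \<Rightarrow> 'a monoid) \<Rightarrow> (nat \<times> 'a) list set" where
  "gp_words n G = {w. \<forall>(i, x)\<in>set w. i \<in> {1..n} \<and> x \<in> carrier (G i)}"

text \<open>The congruence on words defining the graph product: generated by
  multiplying adjacent letters from the same factor, deleting identity letters
  (these two give the free product), and commuting adjacent letters from factors
  joined by an edge (the relations [g_i, g_j] = 1).\<close>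
inductive gp_eq :: "nat \<Rightarrow> (nat \<Rightarrow> 'a monoid) \<Rightarrow> (nat \<Rightarrow> nat \<Rightarrow> bool)
                     \<Rightarrow> (nat \<times> 'a) list \<Rightarrow> (nat \<times> 'a) list \<Rightarrow> bool"
  for n G E where
  gp_refl: "w \<in> gp_words n G \<Longrightarrow> gp_eq n G E w w"
| gp_sym: "gp_eq n G E u v \<Longrightarrow> gp_eq n G E v u"
| gp_trans: "gp_eq n G E u v \<Longrightarrow> gp_eq n G E v w \<Longrightarrow> gp_eq n G E u w"
| gp_mult: "u \<in> gp_words n G \<Longrightarrow> v \<in> gp_words n G \<Longrightarrow> i \<in> {1..n} \<Longrightarrow>
     x \<in> carrier (G i) \<Longrightarrow> y \<in> carrier (G i) \<Longrightarrow>
     gp_eq n G E (u @ [(i, x), (i, y)] @ v) (u @ [(i, x \<otimes>\<^bsub>G i\<^esub> y)] @ v)"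
| gp_one: "u \<in> gp_words n G \<Longrightarrow> v \<in> gp_words n G \<Longrightarrow> i \<in> {1..n} \<Longrightarrow>
     gp_eq n G E (u @ [(i, \<one>\<^bsub>G i\<^esub>)] @ v) (u @ v)"
| gp_comm: "u \<in> gp_words n G \<Longrightarrow> v \<in> gp_words n G \<Longrightarrow> i \<in> {1..n} \<Longrightarrow> j \<in> {1..n} \<Longrightarrow>
     E i j \<Longrightarrow> x \<in> carrier (G i) \<Longrightarrow> y \<in> carrier (G j) \<Longrightarrow>
     gp_eq n G E (u @ [(i, x), (j, y)] @ v) (u @ [(j, y), (i, x)] @ v)"

definition gp_classes ::
  "nat \<Rightarrow> (nat \<Rightarrow> 'a monoid) \<Rightarrow> (nat \<Rightarrow> nat \<Rightarrow> bool) \<Rightarrow> (nat \<times> 'a) list set set" where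
  "gp_classes n G E = (\<lambda>u. {w. gp_eq n G E u w}) ` gp_words n G"

definition graph_product ::
  "nat \<Rightarrow> (nat \<Rightarrow> 'a monoid) \<Rightarrow> (nat \<Rightarrow> nat \<Rightarrow> bool) \<Rightarrow> (nat \<times> 'a) list set monoid" where
  "graph_product n G E =
     \<lparr> carrier = gp_classes n G E,
       monoid.mult = (\<lambda>A B. {w. \<exists>u\<in>A. \<exists>v\<in>B. gp_eq n G E (u @ v) w}),
       monoid.one = {w. gp_eq n G E [] w} \<rparr>"

text \<open>The i-th coordinate of the natural projection to G_1 x ... x G_n:
  the product (in order) of the letters of the word lying in G_i.\<close>
definition gp_coord :: "(nat \<Rightarrow> 'a monoid) \<Rightarrow> nat \<Rightarrow> (nat \<times> 'a) list \<Rightarrow> 'a" where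
  "gp_coord G i w = foldr (\<lambda>(j, x) acc. if j = i then x \<otimes>\<^bsub>G i\<^esub> acc else acc) w \<one>\<^bsub>G i\<^esub>"

text \<open>F_{rho_K}: the kernel of the natural projection onto the direct product.\<close>
definition gp_kernel ::
  "nat \<Rightarrow> (nat \<Rightarrow> 'a monoid) \<Rightarrow> (nat \<Rightarrow> nat \<Rightarrow> bool) \<Rightarrow> (nat \<times> 'a) list set set" where
  "gp_kernel n G E =
     {A \<in> carrier (graph_product n G E). \<forall>w\<in>A. \<forall>i\<in>{1..n}. gp_coord G i w = \<one>\<^bsub>G i\<^esub>}"

definition Theta ::
  "nat \<Rightarrow> (nat \<Rightarrow> 'a monoid) \<Rightarrow> (nat \<Rightarrow> nat \<Rightarrow> bool) \<Rightarrow> (nat \<times> 'a) list set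
     \<Rightarrow> (nat \<times> 'a) list set \<Rightarrow> (nat \<times> 'a) list set" where
  "Theta n G E g h = g \<otimes>\<^bsub>graph_product n G E\<^esub> h \<otimes>\<^bsub>graph_product n G E\<^esub>
                       inv\<^bsub>graph_product n G E\<^esub> g"

text \<open>An automorphism phi of the free group F lies in IA iff it induces the
  identity on H_1(F) = F/[F,F], i.e. phi(h) h^{-1} lies in the commutator
  subgroup [F,F] for every h in F.\<close>
definition in_IA :: "('b, 'c) monoid_scheme \<Rightarrow> 'b set \<Rightarrow> ('b \<Rightarrow> 'b) \<Rightarrow> bool" where
  "in_IA \<Gamma> F \<phi> \<longleftrightarrow> (\<forall>h\<in>F. \<phi> h \<otimes>\<^bsub>\<Gamma>\<^esub> inv\<^bsub>\<Gamma>\<^esub> h \<in> derived \<Gamma> F)"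

end

theory Submission
  imports Defs
begin

locale gpx =
  fixes n :: nat and G :: "nat \<Rightarrow> 'a monoid" and E :: "nat \<Rightarrow> nat \<Rightarrow> bool"
  assumes grp: "\<And>i. i \<in> {1..n} \<Longrightarrow> group (G i)"
    and irr: "\<And>i j. E i j \<Longrightarrow> i \<noteq> j"
begin

abbreviation "W \<equiv> gp_words n G"
abbreviation "geq \<equiv> gp_eq n G E"
abbreviation "\<Gamma> \<equiv> graph_product n G E"

lemma mon: "i \<in> {1..n} \<Longrightarrow> monoid (G i)"
  using grp group.is_monoid by blast

lemma words_Cons[simp]: "((i,x)#w \<in> W) \<longleftrightarrow> i\<in>{1..n} \<and> x \<in> carrier (G i) \<and> w \<in> W"
  by (auto simp: gp_words_def)
lemma words_append[simp]: "(u@v \<in> W) \<longleftrightarrow> u \<in> W \<and> v \<in> W"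
  by (auto simp: gp_words_def)
lemma words_Nil[simp]: "[] \<in> W"
  by (auto simp: gp_words_def)

lemma eq_words: "geq u v \<Longrightarrow> u \<in> W \<and> v \<in> W"
  by (induction rule: gp_eq.induct) (auto simp: group.subgroup_self[OF grp] monoid.m_closed[OF group.is_monoid[OF grp]] monoid.one_closed[OF group.is_monoid[OF grp]])

lemma eq_ctx: "geq u v \<Longrightarrow> p \<in> W \<Longrightarrow> s \<in> W \<Longrightarrow> geq (p@u@s) (p@v@s)"
proof (induction rule: gp_eq.induct)
  case (gp_refl w) then show ?case by (simp add: gp_eq.gp_refl)
next
  case (gp_sym u v) then show ?case by (simp add: gp_eq.gp_sym)
next
  case (gp_trans u v w) then show ?case by (meson gp_eq.gp_trans)
next
  case (gp_mult u v i x y) then show ?case using gp_eq.gp_mult[of "p@u" n G "v@s" i x y E] by simp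
next
  case (gp_one u v i) then show ?case using gp_eq.gp_one[of "p@u" n G "v@s" i E] by simp
next
  case (gp_comm u v i j x y) then show ?case using gp_eq.gp_comm[of "p@u" n G "v@s" i j E x y] by simp
qed

lemma eq_app: "geq u u' \<Longrightarrow> geq v v' \<Longrightarrow> geq (u@v) (u'@v')"
proof -
  assume a: "geq u u'" "geq v v'"
  have "geq ([]@u@v) ([]@u'@v)" using eq_ctx[OF a(1), of "[]" v] eq_words[OF a(2)] by simp
  moreover have "geq (u'@v@[]) (u'@v'@[])" using eq_ctx[OF a(2), of u' "[]"] eq_words[OF a(1)] by simp
  ultimately show ?thesis by (simp add: gp_eq.gp_trans)
qed

definition cls :: "(nat \<times> 'a) list \<Rightarrow> (nat \<times> 'a) list set" where
  "cls u = {w. geq u w}"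

lemma cls_eq: "u \<in> W \<Longrightarrow> v \<in> W \<Longrightarrow> cls u = cls v \<longleftrightarrow> geq u v"
  unfolding cls_def using gp_eq.gp_refl gp_eq.gp_sym gp_eq.gp_trans by blast

lemma mem_cls: "w \<in> cls u \<longleftrightarrow> geq u w" by (simp add: cls_def)

lemma carrier_G: "carrier \<Gamma> = cls ` W"
  by (simp add: graph_product_def gp_classes_def cls_def)

lemma mult_cls: "u \<in> W \<Longrightarrow> v \<in> W \<Longrightarrow> cls u \<otimes>\<^bsub>\<Gamma>\<^esub> cls v = cls (u@v)"
  unfolding graph_product_def cls_def
  using eq_app gp_eq.gp_refl gp_eq.gp_trans by auto blast+

lemma one_cls: "\<one>\<^bsub>\<Gamma>\<^esub> = cls []"
  by (simp add: graph_product_def cls_def)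

definition inv_w :: "(nat \<times> 'a) list \<Rightarrow> (nat \<times> 'a) list" where
  "inv_w w = rev (map (\<lambda>(i,x). (i, inv\<^bsub>G i\<^esub> x)) w)"

lemma inv_w_Cons[simp]: "inv_w ((i,x)#w) = inv_w w @ [(i, inv\<^bsub>G i\<^esub> x)]"
  by (simp add: inv_w_def)
lemma inv_w_Nil[simp]: "inv_w [] = []"
  by (simp add: inv_w_def)
lemma inv_w_append[simp]: "inv_w (u@v) = inv_w v @ inv_w u"
  by (simp add: inv_w_def)

lemma inv_w_words: "w \<in> W \<Longrightarrow> inv_w w \<in> W"
  by (induction w) (auto simp: group.inv_closed[OF grp])

lemma inv_w_inv: "w \<in> W \<Longrightarrow> inv_w (inv_w w) = w"
  by (induction w) (auto simp: group.inv_inv[OF grp])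

lemma r_inv_w: "w \<in> W \<Longrightarrow> geq (w @ inv_w w) []"
proof (induction w)
  case Nil then show ?case by (simp add: gp_eq.gp_refl)
next
  case (Cons a w)
  obtain i x where a: "a = (i,x)" by fastforce
  have i: "i \<in> {1..n}" and x: "x \<in> carrier (G i)" and w: "w \<in> W" using Cons.prems a by auto
  have ix: "inv\<^bsub>G i\<^esub> x \<in> carrier (G i)" using grp[OF i] x by simp
  have 1: "geq ([(i,x)]@(w @ inv_w w)@[(i, inv\<^bsub>G i\<^esub> x)]) ([(i,x)]@[]@[(i, inv\<^bsub>G i\<^esub> x)])"
    using eq_ctx[OF Cons.IH[OF w], of "[(i,x)]" "[(i, inv\<^bsub>G i\<^esub> x)]"] i x ix by simp
  have 2: "geq ([]@[(i,x),(i, inv\<^bsub>G i\<^esub> x)]@[]) ([]@[(i, x \<otimes>\<^bsub>G i\<^esub> inv\<^bsub>G i\<^esub> x)]@[])"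
    by (rule gp_eq.gp_mult) (use i x ix in auto)
  have 3: "geq ([]@[(i, \<one>\<^bsub>G i\<^esub>)]@[]) ([]@[])"
    by (rule gp_eq.gp_one) (use i in auto)
  have "x \<otimes>\<^bsub>G i\<^esub> inv\<^bsub>G i\<^esub> x = \<one>\<^bsub>G i\<^esub>" using group.r_inv[OF grp[OF i] x] by simp
  with 1 2 3 show ?case using a by (auto intro: gp_eq.gp_trans)
qed

lemma l_inv_w: "w \<in> W \<Longrightarrow> geq (inv_w w @ w) []"
  using r_inv_w[OF inv_w_words] inv_w_inv by metis

lemma group_G: "group \<Gamma>"
proof (rule groupI)
  fix a b assume "a \<in> carrier \<Gamma>" "b \<in> carrier \<Gamma>"
  then show "a \<otimes>\<^bsub>\<Gamma>\<^esub> b \<in> carrier \<Gamma>" by (auto simp: carrier_G mult_cls)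
next
  show "\<one>\<^bsub>\<Gamma>\<^esub> \<in> carrier \<Gamma>" by (auto simp: carrier_G one_cls)
next
  fix a b c assume "a \<in> carrier \<Gamma>" "b \<in> carrier \<Gamma>" "c \<in> carrier \<Gamma>"
  then show "a \<otimes>\<^bsub>\<Gamma>\<^esub> b \<otimes>\<^bsub>\<Gamma>\<^esub> c = a \<otimes>\<^bsub>\<Gamma>\<^esub> (b \<otimes>\<^bsub>\<Gamma>\<^esub> c)" by (auto simp: carrier_G mult_cls)
next
  fix a assume "a \<in> carrier \<Gamma>"
  then show "\<one>\<^bsub>\<Gamma>\<^esub> \<otimes>\<^bsub>\<Gamma>\<^esub> a = a" by (auto simp: carrier_G mult_cls one_cls)
next
  fix a assume "a \<in> carrier \<Gamma>"
  then obtain w where w: "w \<in> W" "a = cls w" by (auto simp: carrier_G)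
  have "cls (inv_w w) \<otimes>\<^bsub>\<Gamma>\<^esub> a = \<one>\<^bsub>\<Gamma>\<^esub>"
    using w l_inv_w[OF w(1)] inv_w_words[OF w(1)] by (simp add: mult_cls one_cls cls_eq)
  then show "\<exists>y\<in>carrier \<Gamma>. y \<otimes>\<^bsub>\<Gamma>\<^esub> a = \<one>\<^bsub>\<Gamma>\<^esub>" using inv_w_words[OF w(1)] by (auto simp: carrier_G)
qed

lemma inv_cls: "w \<in> W \<Longrightarrow> inv\<^bsub>\<Gamma>\<^esub> (cls w) = cls (inv_w w)"
  apply (rule group.inv_equality[OF group_G])
  using l_inv_w inv_w_words by (auto simp: mult_cls one_cls cls_eq carrier_G)


lemma coord_Cons[simp]: "gp_coord G c ((k,z)#w) = (if k = c then z \<otimes>\<^bsub>G c\<^esub> gp_coord G c w else gp_coord G c w)"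
  by (simp add: gp_coord_def)
lemma coord_Nil[simp]: "gp_coord G c [] = \<one>\<^bsub>G c\<^esub>"
  by (simp add: gp_coord_def)

lemma coord_closed: "c \<in> {1..n} \<Longrightarrow> w \<in> W \<Longrightarrow> gp_coord G c w \<in> carrier (G c)"
  by (induction w) (auto simp: group.is_monoid[OF grp] monoid.m_closed[OF group.is_monoid[OF grp]])

lemma coord_append: "c \<in> {1..n} \<Longrightarrow> u \<in> W \<Longrightarrow> v \<in> W \<Longrightarrow>
   gp_coord G c (u@v) = gp_coord G c u \<otimes>\<^bsub>G c\<^esub> gp_coord G c v"
proof (induction u)
  case Nil then show ?case using monoid.l_one[OF mon coord_closed] by simp
next
  case (Cons a u)
  obtain k z where a: "a = (k,z)" by fastforce
  show ?case using Cons a monoid.m_assoc[OF mon[OF Cons.prems(1)] _ coord_closed coord_closed, of z u v]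
    by auto
qed

lemma coord_eq: "geq u v \<Longrightarrow> c \<in> {1..n} \<Longrightarrow> gp_coord G c u = gp_coord G c v"
proof (induction rule: gp_eq.induct)
  case (gp_mult u v i x y)
  then show ?case
  proof (cases "i = c")
    case True
    then show ?thesis using gp_mult coord_append monoid.m_closed[OF mon, of i x y]
      monoid.m_assoc[OF mon[of i], of x y "gp_coord G i v"] coord_closed[of i v] by simp
  qed (use gp_mult coord_append monoid.m_closed[OF mon, of i x y] in simp)
next
  case (gp_one u v i)
  then show ?case using coord_append[of c u "(i, \<one>\<^bsub>G i\<^esub>) # v"] coord_append[of c u v]
    monoid.l_one[OF mon coord_closed] monoid.one_closed[OF mon, of i] by simp
next
  case (gp_comm u v i j x y)
  have "i \<noteq> j" using irr gp_comm by blast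
  then have "gp_coord G c [(i,x),(j,y)] = gp_coord G c [(j,y),(i,x)]"
    using gp_comm monoid.r_one[OF mon] monoid.l_one[OF mon] by auto
  then show ?case using gp_comm coord_append \<open>i \<noteq> j\<close> by simp
qed auto

end

locale gpx2 = gpx +
  fixes i j :: nat
  assumes i: "i \<in> {1..n}" and j: "j \<in> {1..n}" and ij: "i \<noteq> j"
    and nE1: "\<not> E i j" and nE2: "\<not> E j i"
begin

abbreviation "Gi \<equiv> G i"
abbreviation "Gj \<equiv> G j"

lemma gi: "group (G i)" using grp i by blast
lemma gj: "group (G j)" using grp j by blast
lemma mi: "monoid (G i)" using mon i by blast
lemma mj: "monoid (G j)" using mon j by blast

fun psi :: "'a \<times> 'a \<Rightarrow> (nat \<times> 'a) list \<Rightarrow> 'a \<times> 'a \<Rightarrow> int" where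
  "psi s [] = (\<lambda>_. 0)"
| "psi (p,q) ((k,z)#w) = (\<lambda>t. (if k = i then (if t = (p \<otimes>\<^bsub>G i\<^esub> z, q) then 1 else 0) - (if t = (p,q) then 1 else 0) else 0)
      + psi (if k = i then p \<otimes>\<^bsub>G i\<^esub> z else p, if k = j then q \<otimes>\<^bsub>G j\<^esub> z else q) w t)"

definition endp :: "'a \<times> 'a \<Rightarrow> (nat \<times> 'a) list \<Rightarrow> 'a \<times> 'a" where
  "endp s w = (fst s \<otimes>\<^bsub>G i\<^esub> gp_coord G i w, snd s \<otimes>\<^bsub>G j\<^esub> gp_coord G j w)"

abbreviation "C \<equiv> carrier (G i) \<times> carrier (G j)"

lemma endp_closed: "s \<in> C \<Longrightarrow> w \<in> W \<Longrightarrow> endp s w \<in> C"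
  using coord_closed[OF i] coord_closed[OF j] monoid.m_closed[OF mi] monoid.m_closed[OF mj]
  by (auto simp: endp_def)

lemma endp_Nil[simp]: "s \<in> C \<Longrightarrow> endp s [] = s"
  using monoid.r_one[OF mi] monoid.r_one[OF mj] by (auto simp: endp_def)

lemma endp_append: "s \<in> C \<Longrightarrow> u \<in> W \<Longrightarrow> v \<in> W \<Longrightarrow> endp s (u@v) = endp (endp s u) v"
  using coord_append[OF i] coord_append[OF j] coord_closed[OF i] coord_closed[OF j]
    monoid.m_assoc[OF mi] monoid.m_assoc[OF mj]
  by (auto simp: endp_def)

lemma endp_Cons: "(p,q) \<in> C \<Longrightarrow> k \<in> {1..n} \<Longrightarrow> z \<in> carrier (G k) \<Longrightarrow> w \<in> W \<Longrightarrow>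
  endp (p,q) ((k,z)#w) = endp (if k = i then p \<otimes>\<^bsub>G i\<^esub> z else p, if k = j then q \<otimes>\<^bsub>G j\<^esub> z else q) w"
  using coord_closed[OF i, of w] coord_closed[OF j, of w]
    monoid.m_assoc[OF mi, of p z] monoid.m_assoc[OF mj, of q z] ij
  by (auto simp: endp_def)

lemma endp_eq: "geq u v \<Longrightarrow> endp s u = endp s v"
  using coord_eq[OF _ i] coord_eq[OF _ j] by (simp add: endp_def)

lemma psi_append: "s \<in> C \<Longrightarrow> u \<in> W \<Longrightarrow> psi s (u@v) = (\<lambda>t. psi s u t + psi (endp s u) v t)"
proof (induction u arbitrary: s)
  case Nil then show ?case by simp
next
  case (Cons a u)
  obtain k z where a: "a = (k,z)" by fastforce
  obtain p q where s: "s = (p,q)" by fastforce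
  have k: "k \<in> {1..n}" "z \<in> carrier (G k)" "u \<in> W" using Cons.prems a by auto
  let ?s' = "(if k = i then p \<otimes>\<^bsub>G i\<^esub> z else p, if k = j then q \<otimes>\<^bsub>G j\<^esub> z else q)"
  have s': "?s' \<in> C" using Cons.prems s k monoid.m_closed[OF mi] monoid.m_closed[OF mj] by auto
  have "endp s (a#u) = endp ?s' u" using endp_Cons[of p q k z u] Cons.prems s a k by simp
  then show ?case using Cons.IH[OF s' k(3)] a s by (simp add: algebra_simps)
qed

lemma psi_eq: "geq u v \<Longrightarrow> s \<in> C \<Longrightarrow> psi s u = psi s v"
proof (induction arbitrary: s rule: gp_eq.induct)
  case (gp_mult u v k x y)
  let ?s1 = "endp s u"
  have s1: "?s1 \<in> C" using endp_closed gp_mult by blast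
  obtain p q where pq: "?s1 = (p,q)" by fastforce
  have xy: "x \<otimes>\<^bsub>G k\<^esub> y \<in> carrier (G k)" using monoid.m_closed[OF mon] gp_mult by blast
  have l1: "psi ?s1 [(k,x),(k,y)] = psi ?s1 [(k, x \<otimes>\<^bsub>G k\<^esub> y)]"
    using pq s1 gp_mult monoid.m_assoc[OF mi, of p x y] monoid.m_assoc[OF mj, of q x y] ij
    by (auto simp: fun_eq_iff)
  have l2: "endp ?s1 [(k,x),(k,y)] = endp ?s1 [(k, x \<otimes>\<^bsub>G k\<^esub> y)]"
    using endp_eq[OF gp_eq.gp_mult[of "[]" n G "[]" k x y E]] gp_mult by simp
  have "psi s (u @ [(k,x),(k,y)] @ v) = (\<lambda>t. psi s u t + (psi ?s1 [(k,x),(k,y)] t + psi (endp ?s1 [(k,x),(k,y)]) v t))"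
    using psi_append[OF gp_mult(6) gp_mult(1)] psi_append[OF s1, of "[(k,x),(k,y)]" v] gp_mult by simp
  moreover have "psi s (u @ [(k,x \<otimes>\<^bsub>G k\<^esub> y)] @ v) = (\<lambda>t. psi s u t + (psi ?s1 [(k,x \<otimes>\<^bsub>G k\<^esub> y)] t + psi (endp ?s1 [(k,x \<otimes>\<^bsub>G k\<^esub> y)]) v t))"
    using psi_append[OF gp_mult(6) gp_mult(1)] psi_append[OF s1, of "[(k,x \<otimes>\<^bsub>G k\<^esub> y)]" v] gp_mult xy by simp
  ultimately show ?case using l1 l2 by simp
next
  case (gp_one u v k)
  let ?s1 = "endp s u"
  have s1: "?s1 \<in> C" using endp_closed gp_one by blast
  obtain p q where pq: "?s1 = (p,q)" by fastforce
  have o: "\<one>\<^bsub>G k\<^esub> \<in> carrier (G k)" using monoid.one_closed[OF mon] gp_one by blast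
  have l1: "psi ?s1 [(k,\<one>\<^bsub>G k\<^esub>)] = psi ?s1 []"
    using pq s1 gp_one monoid.r_one[OF mi, of p] monoid.r_one[OF mj, of q] ij
    by (auto simp: fun_eq_iff)
  have l2: "endp ?s1 [(k,\<one>\<^bsub>G k\<^esub>)] = endp ?s1 []"
    using endp_eq[OF gp_eq.gp_one[of "[]" n G "[]" k E]] gp_one by simp
  have "psi s (u @ [(k,\<one>\<^bsub>G k\<^esub>)] @ v) = (\<lambda>t. psi s u t + (psi ?s1 [(k,\<one>\<^bsub>G k\<^esub>)] t + psi (endp ?s1 [(k,\<one>\<^bsub>G k\<^esub>)]) v t))"
    using psi_append[OF gp_one(4) gp_one(1)] psi_append[OF s1, of "[(k,\<one>\<^bsub>G k\<^esub>)]" v] gp_one o by simp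
  moreover have "psi s (u @ v) = (\<lambda>t. psi s u t + psi ?s1 v t)"
    using psi_append[OF gp_one(4) gp_one(1)] by simp
  ultimately show ?case using l1 l2 s1 by simp
next
  case (gp_comm u v k l x y)
  let ?s1 = "endp s u"
  have s1: "?s1 \<in> C" using endp_closed gp_comm by blast
  obtain p q where pq: "?s1 = (p,q)" by fastforce
  have kl: "k \<noteq> l" using irr gp_comm by blast
  have nkl: "\<not> (k = i \<and> l = j)" "\<not> (k = j \<and> l = i)" using nE1 nE2 gp_comm by auto
  have l1: "psi ?s1 [(k,x),(l,y)] = psi ?s1 [(l,y),(k,x)]"
    using pq s1 gp_comm kl nkl ij by (auto simp: fun_eq_iff)
  have l2: "endp ?s1 [(k,x),(l,y)] = endp ?s1 [(l,y),(k,x)]"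
    using endp_eq[OF gp_eq.gp_comm[of "[]" n G "[]" k l E x y]] gp_comm by simp
  have "psi s (u @ [(k,x),(l,y)] @ v) = (\<lambda>t. psi s u t + (psi ?s1 [(k,x),(l,y)] t + psi (endp ?s1 [(k,x),(l,y)]) v t))"
    using psi_append[OF gp_comm(8) gp_comm(1)] psi_append[OF s1, of "[(k,x),(l,y)]" v] gp_comm by simp
  moreover have "psi s (u @ [(l,y),(k,x)] @ v) = (\<lambda>t. psi s u t + (psi ?s1 [(l,y),(k,x)] t + psi (endp ?s1 [(l,y),(k,x)]) v t))"
    using psi_append[OF gp_comm(8) gp_comm(1)] psi_append[OF s1, of "[(l,y),(k,x)]" v] gp_comm by simp
  ultimately show ?case using l1 l2 by simp
qed auto


end
context gpx2
begin
abbreviation "oo \<equiv> (\<one>\<^bsub>G i\<^esub>, \<one>\<^bsub>G j\<^esub>)"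
abbreviation "F \<equiv> gp_kernel n G E"

lemma oo_C: "oo \<in> C" using monoid.one_closed[OF mi] monoid.one_closed[OF mj] by simp

definition good where "good w \<longleftrightarrow> w \<in> W \<and> endp oo w = oo \<and> psi oo w = (\<lambda>_. 0)"

lemma good_Nil: "good []" using oo_C by (simp add: good_def)

lemma good_app: "good u \<Longrightarrow> good v \<Longrightarrow> good (u@v)"
  using psi_append[OF oo_C] endp_append[OF oo_C] by (auto simp: good_def)

lemma inv_props: "w \<in> W \<Longrightarrow> endp oo w = oo \<Longrightarrow>
   endp oo (inv_w w) = oo \<and> psi oo (inv_w w) = (\<lambda>t. - psi oo w t)"
proof -
  assume w: "w \<in> W" "endp oo w = oo"
  have e: "geq (w @ inv_w w) []" using r_inv_w[OF w(1)] .
  have "psi oo (w @ inv_w w) = psi oo []" using psi_eq[OF e oo_C] .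
  then have 1: "psi oo (inv_w w) = (\<lambda>t. - psi oo w t)"
    using psi_append[OF oo_C w(1), of "inv_w w"] w(2) by (simp add: fun_eq_iff add_eq_0_iff)
  have "endp oo (w @ inv_w w) = endp oo []" using endp_eq[OF e] .
  then have "endp oo (inv_w w) = oo" using endp_append[OF oo_C w(1) inv_w_words[OF w(1)]] w(2) oo_C by simp
  with 1 show ?thesis by simp
qed

lemma good_inv: "good w \<Longrightarrow> good (inv_w w)"
  using inv_props inv_w_words by (auto simp: good_def)

lemma comm_good: "w1 \<in> W \<Longrightarrow> w2 \<in> W \<Longrightarrow> endp oo w1 = oo \<Longrightarrow> endp oo w2 = oo \<Longrightarrow>
   good (w1 @ w2 @ inv_w w1 @ inv_w w2)"
proof -
  assume a: "w1 \<in> W" "w2 \<in> W" "endp oo w1 = oo" "endp oo w2 = oo"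
  note i1 = inv_props[OF a(1) a(3)] and i2 = inv_props[OF a(2) a(4)]
  note iw = inv_w_words[OF a(1)] inv_w_words[OF a(2)]
  have "psi oo (w1 @ w2 @ inv_w w1 @ inv_w w2) = (\<lambda>_. 0)"
    using psi_append[OF oo_C] endp_append[OF oo_C] a i1 i2 iw
    by (simp add: fun_eq_iff)
  moreover have "endp oo (w1 @ w2 @ inv_w w1 @ inv_w w2) = oo"
    using endp_append[OF oo_C] a i1 i2 iw by simp
  ultimately show ?thesis using a iw by (simp add: good_def)
qed

lemma kernel_rep: "h \<in> F \<Longrightarrow> \<exists>w\<in>W. h = cls w \<and> endp oo w = oo"
proof -
  assume h: "h \<in> F"
  then obtain w where w: "w \<in> W" "h = cls w" by (auto simp: gp_kernel_def carrier_G)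
  have "w \<in> h" using w gp_eq.gp_refl by (simp add: mem_cls)
  then have "gp_coord G i w = \<one>\<^bsub>G i\<^esub>" "gp_coord G j w = \<one>\<^bsub>G j\<^esub>"
    using h i j by (auto simp: gp_kernel_def)
  then have "endp oo w = oo" using monoid.l_one[OF mi] monoid.l_one[OF mj] monoid.one_closed[OF mi] monoid.one_closed[OF mj] by (simp add: endp_def)
  with w show ?thesis by blast
qed

lemma comm_cls: "h1 \<in> F \<Longrightarrow> h2 \<in> F \<Longrightarrow>
  \<exists>w. h1 \<otimes>\<^bsub>\<Gamma>\<^esub> h2 \<otimes>\<^bsub>\<Gamma>\<^esub> inv\<^bsub>\<Gamma>\<^esub> h1 \<otimes>\<^bsub>\<Gamma>\<^esub> inv\<^bsub>\<Gamma>\<^esub> h2 = cls w \<and> good w"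
proof -
  assume "h1 \<in> F" "h2 \<in> F"
  then obtain w1 w2 where w: "w1 \<in> W" "h1 = cls w1" "endp oo w1 = oo" "w2 \<in> W" "h2 = cls w2" "endp oo w2 = oo"
    using kernel_rep by meson
  have "h1 \<otimes>\<^bsub>\<Gamma>\<^esub> h2 \<otimes>\<^bsub>\<Gamma>\<^esub> inv\<^bsub>\<Gamma>\<^esub> h1 \<otimes>\<^bsub>\<Gamma>\<^esub> inv\<^bsub>\<Gamma>\<^esub> h2 = cls (w1 @ w2 @ inv_w w1 @ inv_w w2)"
    using w inv_w_words by (simp add: inv_cls mult_cls)
  then show ?thesis using comm_good w by blast
qed

lemma derived_good: "A \<in> derived \<Gamma> F \<Longrightarrow> \<exists>w. A = cls w \<and> good w"
  unfolding derived_def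
proof (induction rule: generate.induct)
  case one then show ?case using good_Nil one_cls by blast
next
  case (incl h) then show ?case using comm_cls by blast
next
  case (inv h)
  then obtain w where w: "h = cls w" "good w" using comm_cls by blast
  then have "w \<in> W" by (simp add: good_def)
  then have "inv\<^bsub>\<Gamma>\<^esub> h = cls (inv_w w) \<and> good (inv_w w)" using inv_cls good_inv w by simp
  then show ?case by blast
next
  case (eng h1 h2)
  then obtain w1 w2 where w: "h1 = cls w1" "good w1" "h2 = cls w2" "good w2" by blast
  then have "w1 \<in> W" "w2 \<in> W" by (simp_all add: good_def)
  then have "h1 \<otimes>\<^bsub>\<Gamma>\<^esub> h2 = cls (w1 @ w2) \<and> good (w1 @ w2)" using mult_cls good_app w by simp
  then show ?case by blast
qed

lemma noncomplete:
  assumes x: "x \<in> carrier (G i)" "x \<noteq> \<one>\<^bsub>G i\<^esub>" and y: "y \<in> carrier (G j)" "y \<noteq> \<one>\<^bsub>G j\<^esub>"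
  shows "\<not> (\<forall>g\<in>carrier \<Gamma>. in_IA \<Gamma> F (Theta n G E g))"
proof
  assume all: "\<forall>g\<in>carrier \<Gamma>. in_IA \<Gamma> F (Theta n G E g)"
  have ix: "inv\<^bsub>G i\<^esub> x \<in> carrier (G i)" using x gi by simp
  have iy: "inv\<^bsub>G j\<^esub> y \<in> carrier (G j)" using y gj by simp
  define hw where "hw = [(i,x),(j,y),(i, inv\<^bsub>G i\<^esub> x),(j, inv\<^bsub>G j\<^esub> y)]"
  have hwW: "hw \<in> W" using i j x y ix iy by (simp add: hw_def)
  have gW: "[(i,x)] \<in> W" using i x by simp
  have hF: "cls hw \<in> F"
  proof -
    have "gp_coord G c w = \<one>\<^bsub>G c\<^esub>" if "w \<in> cls hw" "c \<in> {1..n}" for w c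
    proof -
      have "gp_coord G c w = gp_coord G c hw" using coord_eq[of hw w c] that by (simp add: mem_cls)
      also have "\<dots> = \<one>\<^bsub>G c\<^esub>"
        using ij x y ix iy group.r_inv[OF gi] group.r_inv[OF gj] monoid.r_one[OF mi] monoid.r_one[OF mj]
        by (auto simp: hw_def)
      finally show ?thesis .
    qed
    then show ?thesis using hwW by (auto simp: gp_kernel_def carrier_G)
  qed
  define zw where "zw = [(i,x)] @ hw @ [(i, inv\<^bsub>G i\<^esub> x)] @ inv_w hw"
  have "Theta n G E (cls [(i,x)]) (cls hw) \<otimes>\<^bsub>\<Gamma>\<^esub> inv\<^bsub>\<Gamma>\<^esub> (cls hw) = cls zw"
    using gW hwW inv_w_words[OF hwW] inv_w_words[OF gW]
    by (simp add: Theta_def inv_cls mult_cls zw_def)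
  moreover have "in_IA \<Gamma> F (Theta n G E (cls [(i,x)]))" using all gW by (auto simp: carrier_G)
  ultimately have "cls zw \<in> derived \<Gamma> F" using hF unfolding in_IA_def by (metis (no_types, lifting))
  then obtain w where w: "cls zw = cls w" "good w" using derived_good by blast
  have zwW: "zw \<in> W" using gW hwW inv_w_words[OF hwW] i ix by (simp add: zw_def)
  have "geq zw w" using w zwW cls_eq by (simp add: good_def)
  then have "psi oo zw = psi oo w" using psi_eq oo_C by blast
  then have "psi oo zw (x, \<one>\<^bsub>G j\<^esub>) = 0" using w by (simp add: good_def)
  moreover have "psi oo zw (x, \<one>\<^bsub>G j\<^esub>) = -2"
  proof -
    have f: "\<one>\<^bsub>G i\<^esub> \<otimes>\<^bsub>G i\<^esub> x = x" "x \<otimes>\<^bsub>G i\<^esub> x \<otimes>\<^bsub>G i\<^esub> inv\<^bsub>G i\<^esub> x = x"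
      "x \<otimes>\<^bsub>G i\<^esub> inv\<^bsub>G i\<^esub> x = \<one>\<^bsub>G i\<^esub>" "\<one>\<^bsub>G j\<^esub> \<otimes>\<^bsub>G j\<^esub> y = y"
      "y \<otimes>\<^bsub>G j\<^esub> inv\<^bsub>G j\<^esub> y = \<one>\<^bsub>G j\<^esub>"
      "inv\<^bsub>G i\<^esub> (inv\<^bsub>G i\<^esub> x) = x" "inv\<^bsub>G j\<^esub> (inv\<^bsub>G j\<^esub> y) = y"
      using monoid.l_one[OF mi x(1)] monoid.m_assoc[OF mi x(1) x(1) ix] group.r_inv[OF gi x(1)]
        monoid.r_one[OF mi x(1)] monoid.l_one[OF mj y(1)] group.r_inv[OF gj y(1)]
        group.inv_inv[OF gi x(1)] group.inv_inv[OF gj y(1)] by simp_all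
    have xx: "x \<otimes>\<^bsub>G i\<^esub> x \<noteq> x"
      using group.l_cancel_one[OF gi x(1) x(1)] x(2) by simp
    have xx': "x \<noteq> x \<otimes>\<^bsub>G i\<^esub> x" using not_sym[OF xx] .
    show ?thesis using ij x y f xx xx' by (simp add: zw_def hw_def)
  qed
  ultimately show False by simp
qed

end

context gpx
begin

lemma filter_W: "w \<in> W \<Longrightarrow> filter P w \<in> W" by (auto simp: gp_words_def)

lemma sort1:
  assumes n1: "1 \<in> {1..n}" and cpl: "\<And>a b. a \<in> {1..n} \<Longrightarrow> b \<in> {1..n} \<Longrightarrow> a \<noteq> b \<Longrightarrow> E a b"
  shows "w \<in> W \<Longrightarrow> geq w ((1, gp_coord G 1 w) # filter (\<lambda>l. fst l \<noteq> 1) w)"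
proof (induction w)
  case Nil
  have "geq ([]@[(1, \<one>\<^bsub>G 1\<^esub>)]@[]) ([]@[])" by (rule gp_eq.gp_one) (use n1 in auto)
  then show ?case by (simp add: gp_eq.gp_sym)
next
  case (Cons a w)
  obtain k z where a: "a = (k,z)" by fastforce
  have k: "k \<in> {1..n}" "z \<in> carrier (G k)" "w \<in> W" using Cons.prems a by auto
  let ?c = "gp_coord G 1 w" and ?r = "filter (\<lambda>l. fst l \<noteq> 1) w"
  have c: "?c \<in> carrier (G 1)" using coord_closed[OF n1 k(3)] .
  have r: "?r \<in> W" using filter_W[OF k(3)] .
  have 1: "geq ([(k,z)] @ w @ []) ([(k,z)] @ ((1, ?c) # ?r) @ [])"
    using eq_ctx[OF Cons.IH[OF k(3)], of "[(k,z)]" "[]"] k by simp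
  show ?case
  proof (cases "k = 1")
    case True
    have "geq ([] @ [(1,z),(1,?c)] @ ?r) ([] @ [(1, z \<otimes>\<^bsub>G 1\<^esub> ?c)] @ ?r)"
      by (rule gp_eq.gp_mult) (use k c r n1 True in auto)
    then have 2: "geq ((1,z) # (1,?c) # ?r) ((1, z \<otimes>\<^bsub>G 1\<^esub> ?c) # ?r)" by simp
    have "geq ((1,z) # w) ((1,z) # (1,?c) # ?r)" using 1 True by simp
    from gp_eq.gp_trans[OF this 2] show ?thesis using True a by simp
  next
    case False
    have "geq ([] @ [(k,z),(1,?c)] @ ?r) ([] @ [(1,?c),(k,z)] @ ?r)"
      by (rule gp_eq.gp_comm) (use k c r n1 False cpl in auto)
    then have 2: "geq ((k,z) # (1,?c) # ?r) ((1,?c) # (k,z) # ?r)" by simp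
    have "geq ((k,z) # w) ((k,z) # (1,?c) # ?r)" using 1 by simp
    from gp_eq.gp_trans[OF this 2] show ?thesis using False a by simp
  qed
qed

lemma comm1:
  assumes n1: "1 \<in> {1..n}" and cpl: "\<And>a b. a \<in> {1..n} \<Longrightarrow> b \<in> {1..n} \<Longrightarrow> a \<noteq> b \<Longrightarrow> E a b"
    and a: "a \<in> carrier (G 1)"
  shows "r \<in> W \<Longrightarrow> \<forall>l\<in>set r. fst l \<noteq> 1 \<Longrightarrow> geq ([(1,a)] @ r) (r @ [(1,a)])"
proof (induction r)
  case Nil then show ?case using n1 a by (simp add: gp_eq.gp_refl)
next
  case (Cons b r)
  obtain k z where b: "b = (k,z)" by fastforce
  have k: "k \<in> {1..n}" "z \<in> carrier (G k)" "r \<in> W" "k \<noteq> 1" using Cons.prems b by auto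
  have 1: "geq ([] @ [(1,a),(k,z)] @ r) ([] @ [(k,z),(1,a)] @ r)"
    by (rule gp_eq.gp_comm) (use k a n1 cpl in auto)
  have 2: "geq ([(k,z)] @ ([(1,a)] @ r) @ []) ([(k,z)] @ (r @ [(1,a)]) @ [])"
    using eq_ctx[OF Cons.IH, of "[(k,z)]" "[]"] k Cons.prems by simp
  show ?case using gp_eq.gp_trans[OF 1[simplified] 2[simplified]] b by simp
qed

lemma complete:
  assumes n1: "1 \<in> {1..n}" and cpl: "\<And>a b. a \<in> {1..n} \<Longrightarrow> b \<in> {1..n} \<Longrightarrow> a \<noteq> b \<Longrightarrow> E a b"
    and a: "a \<in> carrier (G 1)" "a \<noteq> \<one>\<^bsub>G 1\<^esub>"
  shows "cls [(1,a)] \<in> carrier \<Gamma>" "cls [(1,a)] \<noteq> \<one>\<^bsub>\<Gamma>\<^esub>"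
    "\<forall>h\<in>gp_kernel n G E. Theta n G E (cls [(1,a)]) h = h"
proof -
  have gW: "[(1,a)] \<in> W" using n1 a by simp
  show "cls [(1,a)] \<in> carrier \<Gamma>" using gW by (simp add: carrier_G)
  show "cls [(1,a)] \<noteq> \<one>\<^bsub>\<Gamma>\<^esub>"
  proof
    assume "cls [(1,a)] = \<one>\<^bsub>\<Gamma>\<^esub>"
    then have "geq [(1,a)] []" using gW by (simp add: one_cls cls_eq)
    then have "gp_coord G 1 [(1,a)] = gp_coord G 1 []" using coord_eq n1 by blast
    then show False using a monoid.r_one[OF mon[OF n1]] by simp
  qed
  show "\<forall>h\<in>gp_kernel n G E. Theta n G E (cls [(1,a)]) h = h"
  proof
    fix h assume h: "h \<in> gp_kernel n G E"
    then obtain w where w: "w \<in> W" "h = cls w" by (auto simp: gp_kernel_def carrier_G)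
    have "w \<in> h" using w gp_eq.gp_refl by (simp add: mem_cls)
    then have c1: "gp_coord G 1 w = \<one>\<^bsub>G 1\<^esub>" using h n1 by (auto simp: gp_kernel_def)
    let ?r = "filter (\<lambda>l. fst l \<noteq> 1) w"
    have r: "?r \<in> W" using filter_W[OF w(1)] .
    have "geq ([] @ [(1, \<one>\<^bsub>G 1\<^esub>)] @ ?r) ([] @ ?r)" by (rule gp_eq.gp_one) (use r n1 in auto)
    then have "geq w ?r" using gp_eq.gp_trans[OF sort1[OF n1 cpl w(1)]] c1 by simp
    then have hr: "h = cls ?r" using w r cls_eq by simp
    have "geq ([(1,a)] @ ?r) (?r @ [(1,a)])" using comm1[OF n1 cpl a(1) r] by auto
    then have cm: "cls [(1,a)] \<otimes>\<^bsub>\<Gamma>\<^esub> h = h \<otimes>\<^bsub>\<Gamma>\<^esub> cls [(1,a)]"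
      using hr gW r by (simp add: mult_cls cls_eq)
    have gc: "cls [(1,a)] \<in> carrier \<Gamma>" "h \<in> carrier \<Gamma>" using gW r hr by (auto simp: carrier_G)
    interpret GG: group \<Gamma> by (rule group_G)
    have "cls [(1,a)] \<otimes>\<^bsub>\<Gamma>\<^esub> h \<otimes>\<^bsub>\<Gamma>\<^esub> inv\<^bsub>\<Gamma>\<^esub> cls [(1,a)]
        = h \<otimes>\<^bsub>\<Gamma>\<^esub> cls [(1,a)] \<otimes>\<^bsub>\<Gamma>\<^esub> inv\<^bsub>\<Gamma>\<^esub> cls [(1,a)]" using cm by simp
    also have "\<dots> = h \<otimes>\<^bsub>\<Gamma>\<^esub> (cls [(1,a)] \<otimes>\<^bsub>\<Gamma>\<^esub> inv\<^bsub>\<Gamma>\<^esub> cls [(1,a)])"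
      using gc by (simp add: GG.m_assoc)
    also have "\<dots> = h" using gc by simp
    finally show "Theta n G E (cls [(1,a)]) h = h" unfolding Theta_def .
  qed
qed

end

theorem corollary5p5:
  fixes n :: nat and G :: "nat \<Rightarrow> 'a monoid" and K :: "nat set set"
  assumes n_pos: "1 \<le> n"
    and groups: "\<And>i. i \<in> {1..n} \<Longrightarrow> group (G i)"
    and finite: "\<And>i. i \<in> {1..n} \<Longrightarrow> finite (carrier (G i))"
    and nontrivial: "\<And>i. i \<in> {1..n} \<Longrightarrow> carrier (G i) \<noteq> {\<one>\<^bsub>G i\<^esub>}"
    and complex: "simplicial_complex n K"
    and chordal: "chordal n (skel_edge K)"
    and faithful: "\<And>g. g \<in> carrier (graph_product n G (skel_edge K)) \<Longrightarrow>
        (\<forall>h\<in>gp_kernel n G (skel_edge K). Theta n G (skel_edge K) g h = h) \<Longrightarrow>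
        g = \<one>\<^bsub>graph_product n G (skel_edge K)\<^esub>"
  shows "\<not> (\<forall>g\<in>carrier (graph_product n G (skel_edge K)).
             in_IA (graph_product n G (skel_edge K)) (gp_kernel n G (skel_edge K))
                   (Theta n G (skel_edge K) g))"
proof -
  have G1: "gpx n G (skel_edge K)" by (rule gpx.intro) (auto simp: skel_edge_def groups)
  interpret gpx n G "skel_edge K" by (rule G1)
  have n1: "1 \<in> {1..n}" using n_pos by simp
  have ex: "\<exists>x\<in>carrier (G k). x \<noteq> \<one>\<^bsub>G k\<^esub>" if "k \<in> {1..n}" for k
  proof -
    have "\<one>\<^bsub>G k\<^esub> \<in> carrier (G k)" using groups[OF that] by (simp add: group.is_monoid monoid.one_closed)
    then show ?thesis using nontrivial[OF that] by blast
  qed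
  show ?thesis
  proof (cases "\<exists>a\<in>{1..n}. \<exists>b\<in>{1..n}. a \<noteq> b \<and> \<not> skel_edge K a b")
    case True
    then obtain a b where ab: "a \<in> {1..n}" "b \<in> {1..n}" "a \<noteq> b" "\<not> skel_edge K a b" by blast
    have ba: "\<not> skel_edge K b a" using ab by (auto simp: skel_edge_def insert_commute)
    interpret gpx2 n G "skel_edge K" a b
      by (intro gpx2.intro G1 gpx2_axioms.intro) (use ab ba in auto)
    obtain x y where "x \<in> carrier (G a)" "x \<noteq> \<one>\<^bsub>G a\<^esub>" "y \<in> carrier (G b)" "y \<noteq> \<one>\<^bsub>G b\<^esub>"
      using ex ab by meson
    then show ?thesis using noncomplete by blast
  next
    case False
    then have cpl: "\<And>a b. a \<in> {1..n} \<Longrightarrow> b \<in> {1..n} \<Longrightarrow> a \<noteq> b \<Longrightarrow> skel_edge K a b" by blast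
    obtain x where x: "x \<in> carrier (G 1)" "x \<noteq> \<one>\<^bsub>G 1\<^esub>" using ex[OF n1] by blast
    note c = complete[OF n1 cpl x]
    have "cls [(1,x)] = \<one>\<^bsub>graph_product n G (skel_edge K)\<^esub>" using faithful[OF c(1) c(3)] .
    then show ?thesis using c(2) by blast
  qed
qed

end
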